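(* In the weighted Tempered Gibbs Sampling setting below, the Markov chain $\boldsymbol{x}^{(1)},\boldsymbol{x}^{(2)},\dots$ induced by the index-selection and tempered-update steps is reversible with respect to $fZ$, where $Z(\boldsymbol{x})=\zeta^{-1}\sum_{i=1}^d p_i(\boldsymbol{x})$. Moreover, the frequency of updating of the $i$-th coordinate (the stationary probability that index $i$ is selected at an iteration) equals $\zeta^{-1}\mathbb{E}_{\boldsymbol{x}\sim f}[\eta_i(\boldsymbol{x}_{-i})]$.
   Context: Let $f$ be a probability density on $\mathcal{X}=\mathcal{X}_1\times\dots\times\mathcal{X}_d$; for each $i,\boldsymbol{x}_{-i}$, $g(\cdot|\boldsymbol{x}_{-i})$ is a probability density on $\mathcal{X}_i$ absolutely continuous w.r.t. the full conditional $f(\cdot|\boldsymbol{x}_{-i})$. Let $\eta_i(\boldsymbol{x}_{-i})\ge 0$ be weight functions and $\zeta=\sum_{i=1}^d\mathbb{E}_{\boldsymbol{x}\sim f}[\eta_i(\boldsymbol{x}_{-i})]\in(0,\infty)$. Define $p_i(\boldsymbol{x})=\eta_i(\boldsymbol{x}_{-i})\,g(x_i|\boldsymbol{x}_{-i})/f(x_i|\boldsymbol{x}_{-i})$. wTGS chain: from $\boldsymbol{x}$, (1) sample $i$ with probability $p_i(\boldsymbol{x})/\sum_j p_j(\boldsymbol{x})$; (2) resample $x_i\sim g(\cdot|\boldsymbol{x}_{-i})$ keeping $\boldsymbol{x}_{-i}$; states are weighted by $Z(\boldsymbol{x})^{-1}$. $fZ$ denotes $\boldsymbol{x}\mapsto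 f(\boldsymbol{x})Z(\boldsymbol{x})$. *)

theory Defs
  imports "HOL-Analysis.Analysis"
begin

definition state_measure :: "nat \<Rightarrow> (nat \<Rightarrow> 'a measure) \<Rightarrow> (nat \<Rightarrow> 'a) measure" where
  "state_measure d M = PiM {..<d} M"

definition marg :: "(nat \<Rightarrow> 'a measure) \<Rightarrow> ((nat \<Rightarrow> 'a) \<Rightarrow> real) \<Rightarrow> nat \<Rightarrow> (nat \<Rightarrow> 'a) \<Rightarrow> real" where
  "marg M f i x = enn2real (\<integral>\<^sup>+ y. ennreal (f (x(i := y))) \<partial>M i)"

definition fcond :: "(nat \<Rightarrow> 'a measure) \<Rightarrow> ((nat \<Rightarrow> 'a) \<Rightarrow> real) \<Rightarrow> nat \<Rightarrow> (nat \<Rightarrow> 'a) \<Rightarrow> 'a \<Rightarrow> real" where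
  "fcond M f i x y = f (x(i := y)) / marg M f i x"

definition pw :: "(nat \<Rightarrow> 'a measure) \<Rightarrow> ((nat \<Rightarrow> 'a) \<Rightarrow> real) \<Rightarrow> (nat \<Rightarrow> (nat \<Rightarrow> 'a) \<Rightarrow> 'a \<Rightarrow> real)
    \<Rightarrow> (nat \<Rightarrow> (nat \<Rightarrow> 'a) \<Rightarrow> real) \<Rightarrow> nat \<Rightarrow> (nat \<Rightarrow> 'a) \<Rightarrow> real" where
  "pw M f g \<eta> i x = \<eta> i x * g i x (x i) / fcond M f i x (x i)"

definition zeta :: "nat \<Rightarrow> (nat \<Rightarrow> 'a measure) \<Rightarrow> ((nat \<Rightarrow> 'a) \<Rightarrow> real) \<Rightarrow> (nat \<Rightarrow> (nat \<Rightarrow> 'a) \<Rightarrow> real) \<Rightarrow> ennreal" where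
  "zeta d M f \<eta> = (\<Sum>i<d. \<integral>\<^sup>+ x. ennreal (f x * \<eta> i x) \<partial>state_measure d M)"

definition Zw :: "nat \<Rightarrow> (nat \<Rightarrow> 'a measure) \<Rightarrow> ((nat \<Rightarrow> 'a) \<Rightarrow> real) \<Rightarrow> (nat \<Rightarrow> (nat \<Rightarrow> 'a) \<Rightarrow> 'a \<Rightarrow> real)
    \<Rightarrow> (nat \<Rightarrow> (nat \<Rightarrow> 'a) \<Rightarrow> real) \<Rightarrow> (nat \<Rightarrow> 'a) \<Rightarrow> real" where
  "Zw d M f g \<eta> x = (\<Sum>i<d. pw M f g \<eta> i x) / enn2real (zeta d M f \<eta>)"

definition sel :: "nat \<Rightarrow> (nat \<Rightarrow> 'a measure) \<Rightarrow> ((nat \<Rightarrow> 'a) \<Rightarrow> real) \<Rightarrow> (nat \<Rightarrow> (nat \<Rightarrow> 'a) \<Rightarrow> 'a \<Rightarrow> real)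
    \<Rightarrow> (nat \<Rightarrow> (nat \<Rightarrow> 'a) \<Rightarrow> real) \<Rightarrow> nat \<Rightarrow> (nat \<Rightarrow> 'a) \<Rightarrow> real" where
  "sel d M f g \<eta> i x = pw M f g \<eta> i x / (\<Sum>j<d. pw M f g \<eta> j x)"

definition wtgs_kernel :: "nat \<Rightarrow> (nat \<Rightarrow> 'a measure) \<Rightarrow> ((nat \<Rightarrow> 'a) \<Rightarrow> real) \<Rightarrow> (nat \<Rightarrow> (nat \<Rightarrow> 'a) \<Rightarrow> 'a \<Rightarrow> real)
    \<Rightarrow> (nat \<Rightarrow> (nat \<Rightarrow> 'a) \<Rightarrow> real) \<Rightarrow> (nat \<Rightarrow> 'a) \<Rightarrow> (nat \<Rightarrow> 'a) set \<Rightarrow> ennreal" where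
  "wtgs_kernel d M f g \<eta> x A =
     (\<Sum>i<d. ennreal (sel d M f g \<eta> i x) *
        (\<integral>\<^sup>+ y. ennreal (g i x y) * indicator A (x(i := y)) \<partial>M i))"

definition reversible_wrt :: "'b measure \<Rightarrow> ('b \<Rightarrow> 'b set \<Rightarrow> ennreal) \<Rightarrow> bool" where
  "reversible_wrt N K \<longleftrightarrow>
     (\<forall>A\<in>sets N. \<forall>B\<in>sets N. (\<integral>\<^sup>+ x\<in>A. K x B \<partial>N) = (\<integral>\<^sup>+ x\<in>B. K x A \<partial>N))"

end

theory Submission
  imports Defs
begin

locale wtgs =
  fixes d :: nat and M :: "nat \<Rightarrow> 'a measure"
    and f :: "(nat \<Rightarrow> 'a) \<Rightarrow> real"
    and g :: "nat \<Rightarrow> (nat \<Rightarrow> 'a) \<Rightarrow> 'a \<Rightarrow> real"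
    and \<eta> :: "nat \<Rightarrow> (nat \<Rightarrow> 'a) \<Rightarrow> real"
  assumes sf: "\<And>i. i < d \<Longrightarrow> sigma_finite_measure (M i)"
    and f_meas: "f \<in> borel_measurable (state_measure d M)"
    and f_nonneg: "\<And>x. x \<in> space (state_measure d M) \<Longrightarrow> 0 \<le> f x"
    and f_dens: "(\<integral>\<^sup>+ x. ennreal (f x) \<partial>state_measure d M) = 1"
    and g_meas: "\<And>i. i < d \<Longrightarrow> (\<lambda>(x, y). g i x y) \<in> borel_measurable (state_measure d M \<Otimes>\<^sub>M M i)"
    and g_nonneg: "\<And>i x y. i < d \<Longrightarrow> x \<in> space (state_measure d M) \<Longrightarrow> y \<in> space (M i) \<Longrightarrow> 0 \<le> g i x y"
    and g_dens: "\<And>i x. i < d \<Longrightarrow> x \<in> space (state_measure d M) \<Longrightarrow>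
                   (\<integral>\<^sup>+ y. ennreal (g i x y) \<partial>M i) = 1"
    and g_indep: "\<And>i x y. i < d \<Longrightarrow> x \<in> space (state_measure d M) \<Longrightarrow> y \<in> space (M i) \<Longrightarrow>
                   g i (x(i := y)) = g i x"
    and g_ac: "\<And>i x. i < d \<Longrightarrow> x \<in> space (state_measure d M) \<Longrightarrow> 0 < marg M f i x \<Longrightarrow>
                 absolutely_continuous (density (M i) (\<lambda>y. ennreal (fcond M f i x y)))
                                       (density (M i) (\<lambda>y. ennreal (g i x y)))"
    and eta_meas: "\<And>i. i < d \<Longrightarrow> \<eta> i \<in> borel_measurable (state_measure d M)"
    and eta_nonneg: "\<And>i x. i < d \<Longrightarrow> x \<in> space (state_measure d M) \<Longrightarrow> 0 \<le> \<eta> i x"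
    and eta_indep: "\<And>i x y. i < d \<Longrightarrow> x \<in> space (state_measure d M) \<Longrightarrow> y \<in> space (M i) \<Longrightarrow>
                   \<eta> i (x(i := y)) = \<eta> i x"
    and zeta_pos: "0 < zeta d M f \<eta>"
    and zeta_fin: "zeta d M f \<eta> < \<infinity>"
begin

abbreviation "P \<equiv> state_measure d M"

lemma upd_meas:
  assumes i: "i < d" and J: "insert i J = {..<d}"
  shows "(\<lambda>\<omega>. (fst \<omega>)(i := snd \<omega>)) \<in> measurable (PiM J M \<Otimes>\<^sub>M M i) P"
proof -
  have eq: "(\<lambda>\<omega>. (fst \<omega>)(i := snd \<omega>)) = (\<lambda>\<omega> j. (\<lambda>j \<omega>. if j = i then snd \<omega> else fst \<omega> j) j \<omega>)"
    by (auto simp: fun_eq_iff)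
  show ?thesis unfolding eq state_measure_def
  proof (rule measurable_PiM_single')
    fix j assume j: "j \<in> {..<d}"
    show "(\<lambda>\<omega>. if j = i then snd \<omega> else fst \<omega> j) \<in> measurable (PiM J M \<Otimes>\<^sub>M M i) (M j)"
    proof (cases "j = i")
      case True then show ?thesis by simp
    next
      case False
      then have "j \<in> J" using j J by auto
      have "(\<lambda>\<omega>. fst \<omega> j) \<in> measurable (PiM J M \<Otimes>\<^sub>M M i) (M j)"
        using measurable_compose[OF measurable_fst measurable_component_singleton[OF \<open>j \<in> J\<close>, of M], of "M i"]
        by (simp add: comp_def)
      then show ?thesis using False by simp
    qed
  next
    show "(\<lambda>\<omega> j. if j = i then snd \<omega> else fst \<omega> j) \<in> space (PiM J M \<Otimes>\<^sub>M M i) \<rightarrow> (\<Pi>\<^sub>E j\<in>{..<d}. space (M j))"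
    proof
      fix \<omega> assume "\<omega> \<in> space (PiM J M \<Otimes>\<^sub>M M i)"
      then have "fst \<omega> \<in> (\<Pi>\<^sub>E j\<in>J. space (M j))" "snd \<omega> \<in> space (M i)"
        by (auto simp: space_pair_measure space_PiM)
      then show "(\<lambda>j. if j = i then snd \<omega> else fst \<omega> j) \<in> (\<Pi>\<^sub>E j\<in>{..<d}. space (M j))"
        using J i unfolding PiE_iff extensional_def by auto
    qed
  qed
qed


lemma ins:
  assumes i: "i < d" and F: "F \<in> borel_measurable P"
  shows "(\<integral>\<^sup>+x. F x \<partial>P) = (\<integral>\<^sup>+z. (\<integral>\<^sup>+u. F (z(i:=u)) \<partial>M i) \<partial>PiM ({..<d}-{i}) M)"
proof -
  define M' where "M' = (\<lambda>j. if j < d then M j else count_space ({}::'a set))"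
  interpret product_sigma_finite M'
    unfolding product_sigma_finite_def M'_def
    using sf by (auto intro: sigma_finite_measure_count_space_countable)
  have I: "insert i ({..<d}-{i}) = {..<d}" using i by auto
  have e1: "P = PiM (insert i ({..<d}-{i})) M'" unfolding state_measure_def I M'_def
    by (rule PiM_cong) auto
  have e2: "PiM ({..<d}-{i}) M = PiM ({..<d}-{i}) M'" unfolding M'_def
    by (rule PiM_cong) auto
  have e3: "M i = M' i" using i M'_def by simp
  have "(\<integral>\<^sup>+x. F x \<partial>P) = (\<integral>\<^sup>+z. (\<integral>\<^sup>+u. F (z(i:=u)) \<partial>M' i) \<partial>PiM ({..<d}-{i}) M')"
    unfolding e1 by (rule product_nn_integral_insert) (use F e1 in auto)
  then show ?thesis unfolding e2 e3 .
qed

lemma upd_space: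
  assumes i: "i < d" and J: "insert i J = {..<d}" and z: "z \<in> space (PiM J M)" and u: "u \<in> space (M i)"
  shows "z(i:=u) \<in> space P"
  using measurable_space[OF upd_meas[OF i J], of "(z,u)"] z u by (simp add: space_pair_measure)

lemma upd_comp_meas:
  assumes i: "i < d" and J: "insert i J = {..<d}" and F: "F \<in> borel_measurable P"
  shows "(\<lambda>(z,u). F (z(i:=u))) \<in> borel_measurable (PiM J M \<Otimes>\<^sub>M M i)"
  using measurable_compose[OF upd_meas[OF i J] F] by (simp add: comp_def split_beta')

lemma nn_upd_meas:
  assumes i: "i < d" and J: "insert i J = {..<d}" and F: "F \<in> borel_measurable P"
  shows "(\<lambda>z. \<integral>\<^sup>+u. ennreal (F (z(i:=u))) \<partial>M i) \<in> borel_measurable (PiM J M)"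
proof -
  interpret sigma_finite_measure "M i" using sf i by simp
  have "(\<lambda>(z,u). F (z(i:=u))) \<in> borel_measurable (PiM J M \<Otimes>\<^sub>M M i)"
    by (rule upd_comp_meas[OF i J F])
  then have "(\<lambda>(z,u). ennreal (F (z(i:=u)))) \<in> borel_measurable (PiM J M \<Otimes>\<^sub>M M i)"
    by (simp add: split_beta')
  then show ?thesis by (rule borel_measurable_nn_integral[of "\<lambda>z u. ennreal (F (z(i:=u)))", simplified])
qed

lemma marg_meas:
  assumes i: "i < d" and J: "insert i J = {..<d}"
  shows "marg M f i \<in> borel_measurable (PiM J M)"
proof -
  have "marg M f i = (\<lambda>z. enn2real (\<integral>\<^sup>+u. ennreal (f (z(i:=u))) \<partial>M i))"
    by (simp add: fun_eq_iff marg_def)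
  then show ?thesis using nn_upd_meas[OF i J f_meas] by simp
qed

lemma diag_meas:
  assumes i: "i < d"
  shows "(\<lambda>x. g i x (x i)) \<in> borel_measurable P"
proof -
  have "(\<lambda>x. (x, x i)) \<in> measurable P (P \<Otimes>\<^sub>M M i)"
    unfolding state_measure_def apply measurable using i by auto
  from measurable_compose[OF this g_meas[OF i]] show ?thesis by simp
qed

lemma pw_meas:
  assumes i: "i < d"
  shows "pw M f g \<eta> i \<in> borel_measurable P"
proof -
  have m: "marg M f i \<in> borel_measurable P"
    using marg_meas[OF i, of "{..<d}"] i unfolding state_measure_def by auto
  have "pw M f g \<eta> i = (\<lambda>x. \<eta> i x * g i x (x i) / (f x / marg M f i x))"
    by (simp add: fun_eq_iff pw_def fcond_def)
  then show ?thesis using m diag_meas[OF i] eta_meas[OF i] f_meas by simp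
qed

lemma sum_pw_meas: "(\<lambda>x. \<Sum>j<d. pw M f g \<eta> j x) \<in> borel_measurable P"
  by (rule borel_measurable_sum) (simp add: pw_meas)

lemma Zw_meas: "Zw d M f g \<eta> \<in> borel_measurable P"
proof -
  have "Zw d M f g \<eta> = (\<lambda>x. (\<Sum>j<d. pw M f g \<eta> j x) / enn2real (zeta d M f \<eta>))"
    by (simp add: fun_eq_iff Zw_def)
  then show ?thesis using sum_pw_meas by simp
qed

lemma sel_meas: "i < d \<Longrightarrow> sel d M f g \<eta> i \<in> borel_measurable P"
proof -
  assume i: "i < d"
  have "sel d M f g \<eta> i = (\<lambda>x. pw M f g \<eta> i x / (\<Sum>j<d. pw M f g \<eta> j x))"
    by (simp add: fun_eq_iff sel_def)
  then show ?thesis using sum_pw_meas pw_meas[OF i] by simp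
qed

lemma Kt_meas:
  assumes i: "i < d" and B: "B \<in> sets P"
  shows "(\<lambda>x. \<integral>\<^sup>+y. ennreal (g i x y) * indicator B (x(i:=y)) \<partial>M i) \<in> borel_measurable P"
proof -
  interpret sigma_finite_measure "M i" using sf i by simp
  have J: "insert i {..<d} = {..<d}" using i by auto
  have u: "(\<lambda>(z,u). indicator B (z(i:=u)) :: ennreal) \<in> borel_measurable (P \<Otimes>\<^sub>M M i)"
    using upd_comp_meas[OF i J, of "indicator B"] B unfolding state_measure_def by auto
  have "(\<lambda>(x,y). ennreal (g i x y) * indicator B (x(i:=y))) \<in> borel_measurable (P \<Otimes>\<^sub>M M i)"
    using u g_meas[OF i] by (simp add: split_beta')
  then show ?thesis by (rule borel_measurable_nn_integral[of "\<lambda>x y. ennreal (g i x y) * indicator B (x(i:=y))", simplified])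
qed

lemma fcond_nonneg: "x \<in> space P \<Longrightarrow> i < d \<Longrightarrow> y \<in> space (M i) \<Longrightarrow> 0 \<le> fcond M f i x y"
  unfolding fcond_def marg_def
  by (rule divide_nonneg_nonneg) (auto intro!: f_nonneg upd_space[of i "{..<d}"] simp: state_measure_def)


lemma upd1_meas:
  assumes i: "i < d" and J: "insert i J = {..<d}" and z: "z \<in> space (PiM J M)" and F: "F \<in> borel_measurable P"
  shows "(\<lambda>u. F (z(i:=u))) \<in> borel_measurable (M i)"
  using measurable_compose[OF measurable_Pair1'[OF z] upd_comp_meas[OF i J F]] by (simp add: comp_def)

lemma gx_meas:
  assumes i: "i < d" and x: "x \<in> space P"
  shows "g i x \<in> borel_measurable (M i)"
  using measurable_compose[OF measurable_Pair1'[OF x] g_meas[OF i]] by (simp add: comp_def)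

definition "zr = enn2real (zeta d M f \<eta>)"

lemma zeta_eq: "zeta d M f \<eta> = ennreal zr"
  using zeta_fin by (simp add: zr_def)

lemma zr_pos: "0 < zr"
  using zeta_pos zeta_eq by simp

definition "hh i x = f x * Zw d M f g \<eta> x * sel d M f g \<eta> i x"

lemma space_P_comp: "x \<in> space P \<Longrightarrow> i < d \<Longrightarrow> x i \<in> space (M i)"
  by (auto simp: state_measure_def space_PiM)

lemma pw_nonneg: "x \<in> space P \<Longrightarrow> i < d \<Longrightarrow> 0 \<le> pw M f g \<eta> i x"
  unfolding pw_def
  by (intro divide_nonneg_nonneg mult_nonneg_nonneg eta_nonneg g_nonneg fcond_nonneg space_P_comp) auto

lemma fpw_eq:
  assumes x: "x \<in> space P" and i: "i < d"
  shows "f x * pw M f g \<eta> i x = (if f x = 0 \<or> marg M f i x = 0 then 0 else \<eta> i x * g i x (x i) * marg M f i x)"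
  by (auto simp: pw_def fcond_def)

lemma hh_eq0:
  assumes x: "x \<in> space P" and i: "i < d"
  shows "hh i x = f x * pw M f g \<eta> i x / zr"
proof -
  let ?S = "\<Sum>j<d. pw M f g \<eta> j x"
  have le: "pw M f g \<eta> i x \<le> ?S"
    by (rule member_le_sum) (use i pw_nonneg[OF x] in auto)
  show ?thesis
  proof (cases "?S = 0")
    case True
    then have "pw M f g \<eta> i x = 0" using le pw_nonneg[OF x i] by linarith
    then show ?thesis using True by (simp add: hh_def Zw_def sel_def zr_def)
  next
    case False
    then show ?thesis by (simp add: hh_def Zw_def sel_def zr_def)
  qed
qed

lemma hh_eq:
  assumes x: "x \<in> space P" and i: "i < d"
  shows "hh i x = (if f x = 0 \<or> marg M f i x = 0 then 0 else \<eta> i x * g i x (x i) * marg M f i x) / zr"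
  using hh_eq0[OF x i] fpw_eq[OF x i] by simp

lemma hh_nonneg: "x \<in> space P \<Longrightarrow> i < d \<Longrightarrow> 0 \<le> hh i x"
  using hh_eq0 pw_nonneg f_nonneg zr_pos by simp

lemma hh_meas: "i < d \<Longrightarrow> hh i \<in> borel_measurable P"
proof -
  assume i: "i < d"
  have "hh i = (\<lambda>x. f x * Zw d M f g \<eta> x * sel d M f g \<eta> i x)" by (simp add: fun_eq_iff hh_def)
  then show ?thesis using f_meas Zw_meas sel_meas[OF i] by simp
qed

lemma space_P_ne: "space P \<noteq> {}"
proof
  assume e: "space P = {}"
  have "(\<integral>\<^sup>+ x. ennreal (f x) \<partial>P) = (\<integral>\<^sup>+ x. 0 \<partial>P)"
    by (rule nn_integral_cong) (simp add: e)
  then show False using f_dens by simp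
qed

definition "x0 = (SOME x. x \<in> space P)"

lemma x0_space: "x0 \<in> space P"
  unfolding x0_def using space_P_ne by (simp add: some_in_eq)

definition "JJ i = {..<d} - {i}"
definition "GG i z = g i (z(i := x0 i))"
definition "EE i z = \<eta> i (z(i := x0 i))"
definition "WW i z = ennreal (EE i z * marg M f i z / zr)"

lemma JJ: "i < d \<Longrightarrow> insert i (JJ i) = {..<d}"
  by (auto simp: JJ_def)

lemma x0i: "i < d \<Longrightarrow> x0 i \<in> space (M i)"
  using space_P_comp[OF x0_space] .

lemma z0_space: "i < d \<Longrightarrow> z \<in> space (PiM (JJ i) M) \<Longrightarrow> z(i := x0 i) \<in> space P"
  using upd_space[OF _ JJ _ x0i] by blast

lemma g_upd: "i < d \<Longrightarrow> z \<in> space (PiM (JJ i) M) \<Longrightarrow> u \<in> space (M i) \<Longrightarrow> g i (z(i:=u)) = GG i z"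
  using g_indep[of i "z(i := x0 i)" u] z0_space[of i z] by (simp add: GG_def)

lemma eta_upd: "i < d \<Longrightarrow> z \<in> space (PiM (JJ i) M) \<Longrightarrow> u \<in> space (M i) \<Longrightarrow> \<eta> i (z(i:=u)) = EE i z"
  using eta_indep[of i "z(i := x0 i)" u] z0_space[of i z] by (simp add: EE_def)

lemma marg_upd: "marg M f i (z(i:=u)) = marg M f i z"
  by (simp add: marg_def)

lemma hh_upd:
  assumes i: "i < d" and z: "z \<in> space (PiM (JJ i) M)" and u: "u \<in> space (M i)"
  shows "hh i (z(i:=u)) = (if f (z(i:=u)) = 0 \<or> marg M f i z = 0 then 0 else EE i z * GG i z u * marg M f i z) / zr"
  using hh_eq[OF upd_space[OF i JJ[OF i] z u] i] g_upd[OF i z u] eta_upd[OF i z u] marg_upd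
  by simp

lemma EE_nonneg: "i < d \<Longrightarrow> z \<in> space (PiM (JJ i) M) \<Longrightarrow> 0 \<le> EE i z"
  unfolding EE_def by (rule eta_nonneg) (auto intro: z0_space)

lemma GG_nonneg: "i < d \<Longrightarrow> z \<in> space (PiM (JJ i) M) \<Longrightarrow> u \<in> space (M i) \<Longrightarrow> 0 \<le> GG i z u"
  unfolding GG_def by (rule g_nonneg) (auto intro: z0_space)

lemma AE_g0:
  assumes i: "i < d" and z: "z \<in> space (PiM (JJ i) M)" and m: "marg M f i z \<noteq> 0"
  shows "AE u in M i. f (z(i:=u)) = 0 \<longrightarrow> GG i z u = 0"
proof -
  let ?x = "z(i := x0 i)"
  have x: "?x \<in> space P" using z0_space[OF i z] .
  have mx: "marg M f i ?x = marg M f i z" by (rule marg_upd)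
  have mpos: "0 < marg M f i ?x" using m mx by (simp add: marg_def order_less_le)
  have ac: "absolutely_continuous (density (M i) (\<lambda>y. ennreal (fcond M f i ?x y)))
                                  (density (M i) (\<lambda>y. ennreal (g i ?x y)))"
    by (rule g_ac[OF i x mpos])
  have fu: "(\<lambda>u. f (z(i:=u))) \<in> borel_measurable (M i)"
    by (rule upd1_meas[OF i JJ[OF i] z f_meas])
  let ?N = "{u \<in> space (M i). f (z(i:=u)) = 0}"
  have Nsets: "?N \<in> sets (M i)" using fu by measurable
  have fc: "fcond M f i ?x = (\<lambda>u. f (z(i:=u)) / marg M f i z)"
    by (simp add: fun_eq_iff fcond_def mx)
  have fcm: "(\<lambda>y. ennreal (fcond M f i ?x y)) \<in> borel_measurable (M i)"
    unfolding fc using fu by simp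
  have "?N \<in> null_sets (density (M i) (\<lambda>y. ennreal (fcond M f i ?x y)))"
    unfolding null_sets_density_iff[OF fcm] using Nsets by (auto simp: fc)
  then have "?N \<in> null_sets (density (M i) (\<lambda>y. ennreal (g i ?x y)))"
    using ac unfolding absolutely_continuous_def by auto
  moreover have gm: "(\<lambda>y. ennreal (g i ?x y)) \<in> borel_measurable (M i)"
    using gx_meas[OF i x] by simp
  ultimately have "AE u in M i. u \<in> ?N \<longrightarrow> ennreal (g i ?x u) = 0"
    unfolding null_sets_density_iff[OF gm] by auto
  then show ?thesis
  proof (rule AE_mp[OF _ AE_I2[OF impI]])
    fix u assume u: "u \<in> space (M i)" and h: "u \<in> ?N \<longrightarrow> ennreal (g i ?x u) = 0"
    show "f (z(i:=u)) = 0 \<longrightarrow> GG i z u = 0"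
      using h u GG_nonneg[OF i z u] by (auto simp: GG_def)
  qed
qed

lemma AE_hh:
  assumes i: "i < d" and z: "z \<in> space (PiM (JJ i) M)"
  shows "AE u in M i. ennreal (hh i (z(i:=u))) = WW i z * ennreal (GG i z u)"
proof (cases "marg M f i z = 0")
  case True
  show ?thesis
    by (rule AE_I2) (simp add: hh_upd[OF i z] True WW_def)
next
  case False
  show ?thesis
  proof (rule AE_mp[OF AE_g0[OF i z False] AE_I2[OF impI]])
    fix u assume u: "u \<in> space (M i)" and h: "f (z(i:=u)) = 0 \<longrightarrow> GG i z u = 0"
    have e: "0 \<le> EE i z" "0 \<le> GG i z u" "0 \<le> marg M f i z"
      using EE_nonneg[OF i z] GG_nonneg[OF i z u] by (auto simp: marg_def)
    have "hh i (z(i:=u)) = (EE i z * marg M f i z / zr) * GG i z u"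
      using hh_upd[OF i z u] h False by auto
    moreover have "0 \<le> EE i z * marg M f i z / zr" using e zr_pos by simp
    ultimately show "ennreal (hh i (z(i:=u))) = WW i z * ennreal (GG i z u)"
      unfolding WW_def using e by (simp only: ennreal_mult)
  qed
qed


definition "QQ i z A = (\<integral>\<^sup>+u. ennreal (GG i z u) * indicator A (z(i:=u)) \<partial>M i)"
definition "Kt i x B = (\<integral>\<^sup>+y. ennreal (g i x y) * indicator B (x(i:=y)) \<partial>M i)"

lemma Kt_meas': "i < d \<Longrightarrow> B \<in> sets P \<Longrightarrow> (\<lambda>x. Kt i x B) \<in> borel_measurable P"
  unfolding Kt_def by (rule Kt_meas)

lemma GG_meas: "i < d \<Longrightarrow> z \<in> space (PiM (JJ i) M) \<Longrightarrow> (\<lambda>u. ennreal (GG i z u)) \<in> borel_measurable (M i)"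
  using gx_meas[OF _ z0_space] unfolding GG_def by simp

lemma zc_meas: "i < d \<Longrightarrow> (\<lambda>z. z(i := x0 i)) \<in> measurable (PiM (JJ i) M) P"
  using measurable_compose[OF measurable_Pair2'[OF x0i] upd_meas[OF _ JJ]] by (simp add: comp_def)

lemma T_eq:
  assumes i: "i < d" and A: "A \<in> sets P" and B: "B \<in> sets P"
  shows "(\<integral>\<^sup>+x. ennreal (hh i x) * indicator A x * Kt i x B \<partial>P)
       = (\<integral>\<^sup>+z. WW i z * QQ i z A * QQ i z B \<partial>PiM (JJ i) M)"
proof -
  note hm[measurable] = hh_meas[OF i]
  note km[measurable] = Kt_meas'[OF i B]
  note A[measurable]
  have meas: "(\<lambda>x. ennreal (hh i x) * indicator A x * Kt i x B) \<in> borel_measurable P"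
    by measurable
  have "(\<integral>\<^sup>+x. ennreal (hh i x) * indicator A x * Kt i x B \<partial>P)
     = (\<integral>\<^sup>+z. (\<integral>\<^sup>+u. ennreal (hh i (z(i:=u))) * indicator A (z(i:=u)) * Kt i (z(i:=u)) B \<partial>M i) \<partial>PiM (JJ i) M)"
    using ins[OF i meas] unfolding JJ_def .
  also have "\<dots> = (\<integral>\<^sup>+z. WW i z * QQ i z A * QQ i z B \<partial>PiM (JJ i) M)"
  proof (rule nn_integral_cong)
    fix z assume z: "z \<in> space (PiM (JJ i) M)"
    have k: "Kt i (z(i:=u)) B = QQ i z B" if u: "u \<in> space (M i)" for u
      unfolding Kt_def QQ_def by (rule nn_integral_cong) (simp add: g_upd[OF i z u])
    have im: "(\<lambda>u. indicator A (z(i:=u)) :: ennreal) \<in> borel_measurable (M i)"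
      by (rule upd1_meas[OF i JJ[OF i] z]) measurable
    have qm: "(\<lambda>u. ennreal (GG i z u) * indicator A (z(i:=u))) \<in> borel_measurable (M i)"
      using GG_meas[OF i z] im by simp
    have "(\<integral>\<^sup>+u. ennreal (hh i (z(i:=u))) * indicator A (z(i:=u)) * Kt i (z(i:=u)) B \<partial>M i)
        = (\<integral>\<^sup>+u. (WW i z * QQ i z B) * (ennreal (GG i z u) * indicator A (z(i:=u))) \<partial>M i)"
    proof (rule nn_integral_cong_AE, rule AE_mp[OF AE_hh[OF i z] AE_I2[OF impI]])
      fix u assume u: "u \<in> space (M i)" and h: "ennreal (hh i (z(i:=u))) = WW i z * ennreal (GG i z u)"
      show "ennreal (hh i (z(i:=u))) * indicator A (z(i:=u)) * Kt i (z(i:=u)) B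
          = (WW i z * QQ i z B) * (ennreal (GG i z u) * indicator A (z(i:=u)))"
        using k[OF u] h by (simp add: ac_simps)
    qed
    also have "\<dots> = WW i z * QQ i z B * QQ i z A"
      by (simp add: nn_integral_cmult[OF qm] QQ_def)
    finally show "(\<integral>\<^sup>+u. ennreal (hh i (z(i:=u))) * indicator A (z(i:=u)) * Kt i (z(i:=u)) B \<partial>M i)
        = WW i z * QQ i z A * QQ i z B" by (simp add: ac_simps)
  qed
  finally show ?thesis .
qed

lemma P2:
  assumes i: "i < d"
  shows "(\<integral>\<^sup>+x. ennreal (hh i x) \<partial>P) = (\<integral>\<^sup>+x. ennreal (f x * \<eta> i x) \<partial>P) / zeta d M f \<eta>"
proof -
  note hm[measurable] = hh_meas[OF i]
  note fm[measurable] = f_meas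
  note em[measurable] = eta_meas[OF i]
  note mm[measurable] = marg_meas[OF i JJ[OF i]]
  note zm[measurable] = zc_meas[OF i]
  have EEm[measurable]: "EE i \<in> borel_measurable (PiM (JJ i) M)"
    unfolding EE_def by measurable
  have "(\<integral>\<^sup>+x. ennreal (hh i x) \<partial>P) = (\<integral>\<^sup>+z. (\<integral>\<^sup>+u. ennreal (hh i (z(i:=u))) \<partial>M i) \<partial>PiM (JJ i) M)"
    using ins[OF i, of "\<lambda>x. ennreal (hh i x)"] unfolding JJ_def by simp
  also have "\<dots> = (\<integral>\<^sup>+z. WW i z \<partial>PiM (JJ i) M)"
  proof (rule nn_integral_cong)
    fix z assume z: "z \<in> space (PiM (JJ i) M)"
    have "(\<integral>\<^sup>+u. ennreal (hh i (z(i:=u))) \<partial>M i) = (\<integral>\<^sup>+u. WW i z * ennreal (GG i z u) \<partial>M i)"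
      by (rule nn_integral_cong_AE) (rule AE_hh[OF i z])
    also have "\<dots> = WW i z * (\<integral>\<^sup>+u. ennreal (GG i z u) \<partial>M i)"
      by (rule nn_integral_cmult[OF GG_meas[OF i z]])
    also have "(\<integral>\<^sup>+u. ennreal (GG i z u) \<partial>M i) = 1"
      unfolding GG_def by (rule g_dens[OF i z0_space[OF i z]])
    finally show "(\<integral>\<^sup>+u. ennreal (hh i (z(i:=u))) \<partial>M i) = WW i z" by (metis mult_1_right)
  qed
  also have "\<dots> = (\<integral>\<^sup>+z. ennreal (EE i z * marg M f i z) / zeta d M f \<eta> \<partial>PiM (JJ i) M)"
  proof (rule nn_integral_cong)
    fix z assume z: "z \<in> space (PiM (JJ i) M)"
    have "0 \<le> EE i z * marg M f i z" using EE_nonneg[OF i z] by (simp add: marg_def)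
    then show "WW i z = ennreal (EE i z * marg M f i z) / zeta d M f \<eta>"
      unfolding WW_def zeta_eq using zr_pos by (simp add: divide_ennreal)
  qed
  also have "\<dots> = (\<integral>\<^sup>+z. ennreal (EE i z * marg M f i z) \<partial>PiM (JJ i) M) / zeta d M f \<eta>"
    by (rule nn_integral_divide) measurable
  also have "(\<integral>\<^sup>+z. ennreal (EE i z * marg M f i z) \<partial>PiM (JJ i) M) = (\<integral>\<^sup>+x. ennreal (f x * \<eta> i x) \<partial>P)"
  proof -
    have "(\<integral>\<^sup>+x. ennreal (f x * \<eta> i x) \<partial>P)
        = (\<integral>\<^sup>+z. (\<integral>\<^sup>+u. ennreal (f (z(i:=u)) * \<eta> i (z(i:=u))) \<partial>M i) \<partial>PiM (JJ i) M)"
      using ins[OF i, of "\<lambda>x. ennreal (f x * \<eta> i x)"] unfolding JJ_def by simp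
    also have "\<dots> = (\<integral>\<^sup>+z. (\<integral>\<^sup>+u. ennreal (f (z(i:=u))) \<partial>M i) * ennreal (EE i z) \<partial>PiM (JJ i) M)"
    proof (rule nn_integral_cong)
      fix z assume z: "z \<in> space (PiM (JJ i) M)"
      have fu: "(\<lambda>u. ennreal (f (z(i:=u)))) \<in> borel_measurable (M i)"
        using upd1_meas[OF i JJ[OF i] z f_meas] by simp
      have "(\<integral>\<^sup>+u. ennreal (f (z(i:=u)) * \<eta> i (z(i:=u))) \<partial>M i)
          = (\<integral>\<^sup>+u. ennreal (f (z(i:=u))) * ennreal (EE i z) \<partial>M i)"
        by (rule nn_integral_cong)
           (simp add: eta_upd[OF i z] ennreal_mult EE_nonneg[OF i z] f_nonneg upd_space[OF i JJ[OF i] z])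
      also have "\<dots> = (\<integral>\<^sup>+u. ennreal (f (z(i:=u))) \<partial>M i) * ennreal (EE i z)"
        by (rule nn_integral_multc[OF fu])
      finally show "(\<integral>\<^sup>+u. ennreal (f (z(i:=u)) * \<eta> i (z(i:=u))) \<partial>M i)
          = (\<integral>\<^sup>+u. ennreal (f (z(i:=u))) \<partial>M i) * ennreal (EE i z)" .
    qed
    also have "\<dots> = (\<integral>\<^sup>+z. ennreal (EE i z * marg M f i z) \<partial>PiM (JJ i) M)"
    proof (rule nn_integral_cong_AE)
      have nm: "(\<lambda>z. \<integral>\<^sup>+u. ennreal (f (z(i:=u))) \<partial>M i) \<in> borel_measurable (PiM (JJ i) M)"
        by (rule nn_upd_meas[OF i JJ[OF i] f_meas])
      have "(\<integral>\<^sup>+z. (\<integral>\<^sup>+u. ennreal (f (z(i:=u))) \<partial>M i) \<partial>PiM (JJ i) M) = 1"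
        using ins[OF i, of "\<lambda>x. ennreal (f x)"] f_dens unfolding JJ_def by simp
      then have "AE z in PiM (JJ i) M. (\<integral>\<^sup>+u. ennreal (f (z(i:=u))) \<partial>M i) \<noteq> \<infinity>"
        by (intro nn_integral_PInf_AE[OF nm]) simp
      then show "AE z in PiM (JJ i) M. (\<integral>\<^sup>+u. ennreal (f (z(i:=u))) \<partial>M i) * ennreal (EE i z)
                   = ennreal (EE i z * marg M f i z)"
      proof (rule AE_mp[OF _ AE_I2[OF impI]])
        fix z assume z: "z \<in> space (PiM (JJ i) M)" and h: "(\<integral>\<^sup>+u. ennreal (f (z(i:=u))) \<partial>M i) \<noteq> \<infinity>"
        have "ennreal (marg M f i z) = (\<integral>\<^sup>+u. ennreal (f (z(i:=u))) \<partial>M i)"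
          unfolding marg_def using h by (simp add: less_top)
        then show "(\<integral>\<^sup>+u. ennreal (f (z(i:=u))) \<partial>M i) * ennreal (EE i z) = ennreal (EE i z * marg M f i z)"
          using EE_nonneg[OF i z] by (metis ennreal_mult enn2real_nonneg marg_def mult.commute)
      qed
    qed
    finally show ?thesis by simp
  qed
  finally show ?thesis .
qed


lemma Zw_nonneg: "x \<in> space P \<Longrightarrow> 0 \<le> Zw d M f g \<eta> x"
  unfolding Zw_def by (intro divide_nonneg_nonneg sum_nonneg) (auto intro: pw_nonneg)

lemma sel_nonneg: "x \<in> space P \<Longrightarrow> i < d \<Longrightarrow> 0 \<le> sel d M f g \<eta> i x"
  unfolding sel_def by (intro divide_nonneg_nonneg sum_nonneg) (auto intro: pw_nonneg)

lemma rev_side: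
  assumes A: "A \<in> sets P" and B: "B \<in> sets P"
  shows "(\<integral>\<^sup>+x\<in>A. wtgs_kernel d M f g \<eta> x B \<partial>density P (\<lambda>x. ennreal (f x * Zw d M f g \<eta> x)))
       = (\<Sum>i<d. \<integral>\<^sup>+z. WW i z * QQ i z A * QQ i z B \<partial>PiM (JJ i) M)"
proof -
  have fZm: "(\<lambda>x. ennreal (f x * Zw d M f g \<eta> x)) \<in> borel_measurable P"
    using f_meas Zw_meas by simp
  have Keq: "(\<lambda>x. wtgs_kernel d M f g \<eta> x B) = (\<lambda>x. \<Sum>i<d. ennreal (sel d M f g \<eta> i x) * Kt i x B)"
    by (simp add: fun_eq_iff wtgs_kernel_def Kt_def)
  have Km: "(\<lambda>x. wtgs_kernel d M f g \<eta> x B) \<in> borel_measurable P"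
    unfolding Keq
    by (rule borel_measurable_sum) (use sel_meas Kt_meas'[OF _ B] in simp)
  have "(\<integral>\<^sup>+x\<in>A. wtgs_kernel d M f g \<eta> x B \<partial>density P (\<lambda>x. ennreal (f x * Zw d M f g \<eta> x)))
      = (\<integral>\<^sup>+x. ennreal (f x * Zw d M f g \<eta> x) * (wtgs_kernel d M f g \<eta> x B * indicator A x) \<partial>P)"
    by (rule nn_integral_density[OF fZm]) (use Km A in simp)
  also have "\<dots> = (\<integral>\<^sup>+x. (\<Sum>i<d. ennreal (hh i x) * indicator A x * Kt i x B) \<partial>P)"
  proof (rule nn_integral_cong)
    fix x assume x: "x \<in> space P"
    have "\<And>i. i < d \<Longrightarrow> ennreal (hh i x) = ennreal (f x * Zw d M f g \<eta> x) * ennreal (sel d M f g \<eta> i x)"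
      unfolding hh_def using sel_nonneg[OF x] by (simp add: ennreal_mult'')
    then show "ennreal (f x * Zw d M f g \<eta> x) * (wtgs_kernel d M f g \<eta> x B * indicator A x)
        = (\<Sum>i<d. ennreal (hh i x) * indicator A x * Kt i x B)"
      unfolding fun_cong[OF Keq, of x] sum_distrib_left sum_distrib_right
      by (intro sum.cong) (simp_all add: ac_simps)
  qed
  also have "\<dots> = (\<Sum>i<d. \<integral>\<^sup>+x. ennreal (hh i x) * indicator A x * Kt i x B \<partial>P)"
  proof (rule nn_integral_sum)
    fix i assume "i \<in> {..<d}"
    then have i: "i < d" by simp
    note hm[measurable] = hh_meas[OF i]
    note km[measurable] = Kt_meas'[OF i B]
    note A[measurable]
    show "(\<lambda>x. ennreal (hh i x) * indicator A x * Kt i x B) \<in> borel_measurable P" by measurable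
  qed
  also have "\<dots> = (\<Sum>i<d. \<integral>\<^sup>+z. WW i z * QQ i z A * QQ i z B \<partial>PiM (JJ i) M)"
    by (intro sum.cong refl T_eq A B) simp
  finally show ?thesis .
qed

lemma main:
  shows "reversible_wrt (density (state_measure d M) (\<lambda>x. ennreal (f x * Zw d M f g \<eta> x)))
                        (wtgs_kernel d M f g \<eta>) \<and>
         (\<forall>i<d.
           (\<integral>\<^sup>+ x. ennreal (f x * Zw d M f g \<eta> x * sel d M f g \<eta> i x) \<partial>state_measure d M)
           = (\<integral>\<^sup>+ x. ennreal (f x * \<eta> i x) \<partial>state_measure d M) / zeta d M f \<eta>)"
proof
  show "reversible_wrt (density P (\<lambda>x. ennreal (f x * Zw d M f g \<eta> x))) (wtgs_kernel d M f g \<eta>)"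
    unfolding reversible_wrt_def
  proof (intro ballI)
    fix A B assume "A \<in> sets (density P (\<lambda>x. ennreal (f x * Zw d M f g \<eta> x)))"
      "B \<in> sets (density P (\<lambda>x. ennreal (f x * Zw d M f g \<eta> x)))"
    then have A: "A \<in> sets P" and B: "B \<in> sets P" by auto
    show "(\<integral>\<^sup>+x\<in>A. wtgs_kernel d M f g \<eta> x B \<partial>density P (\<lambda>x. ennreal (f x * Zw d M f g \<eta> x)))
        = (\<integral>\<^sup>+x\<in>B. wtgs_kernel d M f g \<eta> x A \<partial>density P (\<lambda>x. ennreal (f x * Zw d M f g \<eta> x)))"
      unfolding rev_side[OF A B] rev_side[OF B A] by (simp add: ac_simps)
  qed
next
  show "\<forall>i<d. (\<integral>\<^sup>+ x. ennreal (f x * Zw d M f g \<eta> x * sel d M f g \<eta> i x) \<partial>P)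
           = (\<integral>\<^sup>+ x. ennreal (f x * \<eta> i x) \<partial>P) / zeta d M f \<eta>"
    using P2 unfolding hh_def by blast
qed

end

theorem proposition6:
  fixes d :: nat and M :: "nat \<Rightarrow> 'a measure"
    and f :: "(nat \<Rightarrow> 'a) \<Rightarrow> real"
    and g :: "nat \<Rightarrow> (nat \<Rightarrow> 'a) \<Rightarrow> 'a \<Rightarrow> real"
    and \<eta> :: "nat \<Rightarrow> (nat \<Rightarrow> 'a) \<Rightarrow> real"
  assumes sf: "\<And>i. i < d \<Longrightarrow> sigma_finite_measure (M i)"
    and f_meas: "f \<in> borel_measurable (state_measure d M)"
    and f_nonneg: "\<And>x. x \<in> space (state_measure d M) \<Longrightarrow> 0 \<le> f x"
    and f_dens: "(\<integral>\<^sup>+ x. ennreal (f x) \<partial>state_measure d M) = 1"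
    and g_meas: "\<And>i. i < d \<Longrightarrow> (\<lambda>(x, y). g i x y) \<in> borel_measurable (state_measure d M \<Otimes>\<^sub>M M i)"
    and g_nonneg: "\<And>i x y. i < d \<Longrightarrow> x \<in> space (state_measure d M) \<Longrightarrow> y \<in> space (M i) \<Longrightarrow> 0 \<le> g i x y"
    and g_dens: "\<And>i x. i < d \<Longrightarrow> x \<in> space (state_measure d M) \<Longrightarrow>
                   (\<integral>\<^sup>+ y. ennreal (g i x y) \<partial>M i) = 1"
    and g_indep: "\<And>i x y. i < d \<Longrightarrow> x \<in> space (state_measure d M) \<Longrightarrow> y \<in> space (M i) \<Longrightarrow>
                   g i (x(i := y)) = g i x"
    and g_ac: "\<And>i x. i < d \<Longrightarrow> x \<in> space (state_measure d M) \<Longrightarrow> 0 < marg M f i x \<Longrightarrow>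
                 absolutely_continuous (density (M i) (\<lambda>y. ennreal (fcond M f i x y)))
                                       (density (M i) (\<lambda>y. ennreal (g i x y)))"
    and eta_meas: "\<And>i. i < d \<Longrightarrow> \<eta> i \<in> borel_measurable (state_measure d M)"
    and eta_nonneg: "\<And>i x. i < d \<Longrightarrow> x \<in> space (state_measure d M) \<Longrightarrow> 0 \<le> \<eta> i x"
    and eta_indep: "\<And>i x y. i < d \<Longrightarrow> x \<in> space (state_measure d M) \<Longrightarrow> y \<in> space (M i) \<Longrightarrow>
                   \<eta> i (x(i := y)) = \<eta> i x"
    and zeta_pos: "0 < zeta d M f \<eta>"
    and zeta_fin: "zeta d M f \<eta> < \<infinity>"
  shows "reversible_wrt (density (state_measure d M) (\<lambda>x. ennreal (f x * Zw d M f g \<eta> x)))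
                        (wtgs_kernel d M f g \<eta>) \<and>
         (\<forall>i<d.
           (\<integral>\<^sup>+ x. ennreal (f x * Zw d M f g \<eta> x * sel d M f g \<eta> i x) \<partial>state_measure d M)
           = (\<integral>\<^sup>+ x. ennreal (f x * \<eta> i x) \<partial>state_measure d M) / zeta d M f \<eta>)"
proof -
  interpret wtgs d M f g \<eta>
    by (rule wtgs.intro) (fact assms)+
  show ?thesis by (rule main)
qed

end
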